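(* Let $\mathcal P$ be a finite-dimensional complex solvable Poisson $n$-Lie algebra, and suppose that for some $x,m_1,\dots,m_{n-2}\in\mathcal P$ the restriction of the operator $Q_{(x,m_1,\dots,m_{n-2})}:z\mapsto[x,m_1,\dots,m_{n-2},z]$ to $\mathcal P^2$ is an invertible map $\mathcal P^2\to\mathcal P^2$. Then $\mathcal P\cdot\mathcal P=0$.
   Context: A Poisson $n$-Lie algebra is a commutative associative algebra $(\mathcal P,\cdot)$ with an $n$-linear skew-symmetric bracket satisfying the fundamental identity $[x_1,\dots,x_{n-1},[y_1,\dots,y_n]]=\sum_{i=1}^n[y_1,\dots,[x_1,\dots,x_{n-1},y_i],\dots,y_n]$ and the Leibniz rule $[y\cdot z,x_2,\dots,x_n]=y\cdot[z,x_2,\dots,x_n]+z\cdot[y,x_2,\dots,x_n]$. Products/brackets of subspaces are linear spans; $\mathcal P^2=[\mathcal P,\dots,\mathcal P]+\mathcal P\cdot\mathcal P$. $\mathcal P$ is solvable if $\mathcal P^{(s)}=0$ for some $s$, with $\mathcal P^{(1)}=\mathcal P$, $\mathcal P^{(k+1)}=[\mathcal P^{(k)},\mathcal P^{(k)},\mathcal P,\dots,\mathcal P]+\mathcal P^{(k)}\cdot\mathcal P^{(k)}$. *)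

theory Defs
  imports Complex_Main
begin

text \<open>The commutative associative product is mult, and the n-ary bracket is br, applied to
lists of length n (its values on lists of other lengths are irrelevant).\<close>

definition fin_dim_cvs :: "(complex \<Rightarrow> 'a::ab_group_add \<Rightarrow> 'a) \<Rightarrow> bool" where
  "fin_dim_cvs sc \<longleftrightarrow> vector_space sc \<and> (\<exists>B. finite B \<and> module.span sc B = UNIV)"

definition poisson_nlie ::
  "(complex \<Rightarrow> 'a::ab_group_add \<Rightarrow> 'a) \<Rightarrow> ('a \<Rightarrow> 'a \<Rightarrow> 'a) \<Rightarrow> ('a list \<Rightarrow> 'a) \<Rightarrow> nat \<Rightarrow> bool" where
  "poisson_nlie sc mult br n \<longleftrightarrow>
     vector_space sc \<and>
     \<comment> \<open>commutative associative bilinear product\<close>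
     (\<forall>a. Vector_Spaces.linear sc sc (\<lambda>b. mult a b)) \<and>
     (\<forall>a b. mult a b = mult b a) \<and>
     (\<forall>a b c. mult (mult a b) c = mult a (mult b c)) \<and>
     \<comment> \<open>n-linear bracket\<close>
     (\<forall>xs i. length xs = n \<longrightarrow> i < n \<longrightarrow>
        Vector_Spaces.linear sc sc (\<lambda>y. br (xs[i := y]))) \<and>
     \<comment> \<open>skew-symmetry\<close>
     (\<forall>xs i j. length xs = n \<longrightarrow> i < j \<longrightarrow> j < n \<longrightarrow>
        br (xs[i := xs ! j, j := xs ! i]) = - br xs) \<and>
     \<comment> \<open>fundamental identity\<close>
     (\<forall>xs ys. length xs = n - 1 \<longrightarrow> length ys = n \<longrightarrow>
        br (xs @ [br ys]) = (\<Sum>i<n. br (ys[i := br (xs @ [ys ! i])]))) \<and>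
     \<comment> \<open>Leibniz rule\<close>
     (\<forall>y z xs. length xs = n - 1 \<longrightarrow>
        br (mult y z # xs) = mult y (br (z # xs)) + mult z (br (y # xs)))"

definition br_sp :: "(complex \<Rightarrow> 'a::ab_group_add \<Rightarrow> 'a) \<Rightarrow> ('a list \<Rightarrow> 'a) \<Rightarrow> nat \<Rightarrow> 'a set \<Rightarrow> 'a set \<Rightarrow> 'a set" where
  "br_sp sc br n A B = module.span sc {br (a # b # zs) | a b zs. a \<in> A \<and> b \<in> B \<and> length zs = n - 2}"

definition mult_sp :: "(complex \<Rightarrow> 'a::ab_group_add \<Rightarrow> 'a) \<Rightarrow> ('a \<Rightarrow> 'a \<Rightarrow> 'a) \<Rightarrow> 'a set \<Rightarrow> 'a set \<Rightarrow> 'a set" where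
  "mult_sp sc mult A B = module.span sc {mult a b | a b. a \<in> A \<and> b \<in> B}"

text \<open>P^2 = [P,...,P] + P.P (sum of subspaces = span of union).\<close>
definition sq_sp :: "(complex \<Rightarrow> 'a::ab_group_add \<Rightarrow> 'a) \<Rightarrow> ('a \<Rightarrow> 'a \<Rightarrow> 'a) \<Rightarrow> ('a list \<Rightarrow> 'a) \<Rightarrow> nat \<Rightarrow> 'a set" where
  "sq_sp sc mult br n = module.span sc (br_sp sc br n UNIV UNIV \<union> mult_sp sc mult UNIV UNIV)"

text \<open>Derived series; derived 0 corresponds to P^(1) = P.\<close>
fun derived :: "(complex \<Rightarrow> 'a::ab_group_add \<Rightarrow> 'a) \<Rightarrow> ('a \<Rightarrow> 'a \<Rightarrow> 'a) \<Rightarrow> ('a list \<Rightarrow> 'a) \<Rightarrow> nat \<Rightarrow> nat \<Rightarrow> 'a set" where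
  "derived sc mult br n 0 = UNIV"
| "derived sc mult br n (Suc k) =
     module.span sc (br_sp sc br n (derived sc mult br n k) (derived sc mult br n k)
                     \<union> mult_sp sc mult (derived sc mult br n k) (derived sc mult br n k))"

definition solvable_pnl :: "(complex \<Rightarrow> 'a::ab_group_add \<Rightarrow> 'a) \<Rightarrow> ('a \<Rightarrow> 'a \<Rightarrow> 'a) \<Rightarrow> ('a list \<Rightarrow> 'a) \<Rightarrow> nat \<Rightarrow> bool" where
  "solvable_pnl sc mult br n \<longleftrightarrow> (\<exists>s. derived sc mult br n s = {0})"

end

theory Submission
  imports Defs
begin

lemma half_zero:
  fixes sc :: "complex \<Rightarrow> 'a::ab_group_add \<Rightarrow> 'a"
  assumes vs: "vector_space sc" and h: "v + v = (0::'a::ab_group_add)"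
  shows "v = 0"
proof -
  have ax: "\<And>a x y. sc a (x + y) = sc a x + sc a y" "\<And>a b x. sc (a + b) x = sc a x + sc b x"
    "\<And>a b x. sc a (sc b x) = sc (a * b) x" "\<And>x. sc 1 x = x"
    using vs unfolding vector_space_def by auto
  have z: "\<And>c. sc c 0 = 0"
  proof -
    fix c have "sc c (0 + 0) = sc c 0 + sc c 0" by (rule ax(1))
    thus "sc c 0 = 0" by simp
  qed
  have e1: "sc (1 + 1) v = 0" using ax(2)[of 1 1 v] ax(4)[of v] h by (simp only:)
  have "(1/2) * (1 + 1) = (1::complex)" by simp
  hence "v = sc (1/2) (sc (1 + 1) v)" using ax(3)[of "1/2" "1+1" v] ax(4)[of v] by (simp only:)
  thus ?thesis using e1 z by (simp only:)
qed

lemma lin_zero: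
  fixes sc :: "complex \<Rightarrow> 'a::ab_group_add \<Rightarrow> 'a"
  assumes "Vector_Spaces.linear sc sc f" shows "f 0 = 0"
proof -
  have add: "\<And>x y. f (x + y) = f x + f y" using assms by (simp add: Vector_Spaces.linear_iff)
  have "f (0 + 0) = f 0 + f 0" by (rule add)
  thus ?thesis by simp
qed

lemma lin_neg:
  fixes sc :: "complex \<Rightarrow> 'a::ab_group_add \<Rightarrow> 'a"
  assumes "Vector_Spaces.linear sc sc f" shows "f (- v) = - f v"
proof -
  have add: "\<And>x y. f (x + y) = f x + f y" using assms by (simp add: Vector_Spaces.linear_iff)
  have "f (v + - v) = f v + f (- v)" by (rule add)
  thus ?thesis using lin_zero[OF assms] by (simp add: eq_neg_iff_add_eq_0 add.commute)
qed

theorem proposition5p17: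
  fixes sc :: "complex \<Rightarrow> 'a::ab_group_add \<Rightarrow> 'a"
    and mult :: "'a \<Rightarrow> 'a \<Rightarrow> 'a"
    and br :: "'a list \<Rightarrow> 'a"
    and n :: nat
    and x :: 'a and ms :: "'a list"
  assumes "n \<ge> 2"
    and "fin_dim_cvs sc"
    and "poisson_nlie sc mult br n"
    and "solvable_pnl sc mult br n"
    and "length ms = n - 2"
    and "bij_betw (\<lambda>z. br (x # ms @ [z])) (sq_sp sc mult br n) (sq_sp sc mult br n)"
  shows "mult_sp sc mult UNIV UNIV = {0}"
proof -
  obtain k where nk: "n = Suc (Suc k)" using assms(1) by (metis add_2_eq_Suc le_iff_add)
  have lm: "length ms = k" using assms(5) nk by simp
  define S where "S = sq_sp sc mult br n"
  define Q where "Q = (\<lambda>z. br (x # ms @ [z]))"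
  have P: "vector_space sc" "\<And>a. Vector_Spaces.linear sc sc (\<lambda>b. mult a b)"
     "\<And>xs i. length xs = n \<Longrightarrow> i < n \<Longrightarrow> Vector_Spaces.linear sc sc (\<lambda>y. br (xs[i := y]))"
     "\<And>xs i j. length xs = n \<Longrightarrow> i < j \<Longrightarrow> j < n \<Longrightarrow> br (xs[i := xs ! j, j := xs ! i]) = - br xs"
     "\<And>y z xs. length xs = n - 1 \<Longrightarrow> br (mult y z # xs) = mult y (br (z # xs)) + mult z (br (y # xs))"
    using assms(3) unfolding poisson_nlie_def by blast+
  have md: "module sc" using P(1) module_iff_vector_space by blast
  have inj: "inj_on Q S" using assms(6) unfolding bij_betw_def Q_def S_def by blast
  have S0: "0 \<in> S" unfolding S_def sq_sp_def using module.span_zero[OF md] by blast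
  have multS: "mult a b \<in> S" for a b
  proof -
    have "mult a b \<in> mult_sp sc mult UNIV UNIV" unfolding mult_sp_def
      by (rule module.span_base[OF md]) blast
    thus ?thesis unfolding S_def sq_sp_def by (intro module.span_base[OF md]) blast
  qed
  have QS: "Q y \<in> S" for y
  proof -
    obtain b zs where bz: "ms @ [y] = b # zs" by (cases "ms @ [y]") auto
    have "length (ms @ [y]) = length (b # zs)" using bz by simp
    hence "length zs = n - 2" using lm nk by simp
    hence "Q y \<in> br_sp sc br n UNIV UNIV" unfolding br_sp_def Q_def bz
      by (intro module.span_base[OF md]) blast
    thus ?thesis unfolding S_def sq_sp_def by (intro module.span_base[OF md]) blast
  qed
  have injQ: "a = 0" if "a \<in> S" "Q a = 0" for a
  proof -
    have "Q 0 = 0" unfolding Q_def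
      using lin_zero[OF P(3)[of "x # ms @ [0]" "Suc k"]] lm nk by (simp add: list_update_append)
    thus ?thesis using inj that S0 unfolding inj_on_def by metis
  qed
  have br0: "br (0 # ms @ [z]) = 0" for z
    using lin_zero[OF P(3)[of "0 # ms @ [z]" 0]] lm nk by simp
  have swap: "br (a # ms @ [b]) = - br (b # ms @ [a])" for a b
  proof -
    have "(b # ms @ [a])[0 := (b # ms @ [a]) ! Suc k, Suc k := (b # ms @ [a]) ! 0] = a # ms @ [b]"
      using lm by (simp add: nth_append list_update_append)
    thus ?thesis using P(4)[of "b # ms @ [a]" 0 "Suc k"] lm nk by simp
  qed
  have leib: "br (mult a b # ms @ [z]) = mult a (br (b # ms @ [z])) + mult b (br (a # ms @ [z]))" for a b z
    using P(5)[of "ms @ [z]"] lm nk by simp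
  have mneg: "mult a (- v) = - mult a v" for a v using lin_neg[OF P(2)] .
  have der: "Q (mult a b) = mult a (Q b) + mult b (Q a)" for a b
  proof -
    have "Q (mult a b) = - br (mult a b # ms @ [x])" unfolding Q_def by (rule swap)
    also have "\<dots> = - (mult a (- Q b) + mult b (- Q a))"
    proof -
      have "br (mult a b # ms @ [x]) = mult a (br (b # ms @ [x])) + mult b (br (a # ms @ [x]))" by (rule leib)
      moreover have "br (b # ms @ [x]) = - Q b" "br (a # ms @ [x]) = - Q a" unfolding Q_def by (rule swap)+
      ultimately show ?thesis by simp
    qed
    also have "\<dots> = mult a (Q b) + mult b (Q a)" by (simp add: mneg)
    finally show ?thesis .
  qed
  have Qx: "Q x = 0" unfolding Q_def
  proof -
    have "br (x # ms @ [x]) + br (x # ms @ [x]) = 0" using swap[of x x] eq_neg_iff_add_eq_0 by blast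
    thus "br (x # ms @ [x]) = 0" using half_zero[OF P(1)] by blast
  qed
  have m0: "mult a 0 = 0" for a using lin_zero[OF P(2)] .
  have xx: "mult x x = 0" using injQ[OF multS] der[of x x] Qx m0 by simp
  have xQ: "mult x (Q z) = 0" for z
  proof -
    have "mult x (Q z) + mult x (Q z) = 0" using leib[of x x z] br0 xx unfolding Q_def by simp
    thus ?thesis using half_zero[OF P(1)] by blast
  qed
  have xy: "mult x y = 0" for y
    using injQ[OF multS] der[of x y] Qx xQ m0 by simp
  have yQ: "mult y (Q z) = 0" for y z
    using leib[of x y z] br0 xy unfolding Q_def by simp
  have yz: "mult y z = 0" for y z
    using injQ[OF multS] der[of y z] yQ by simp
  have "{mult a b | a b. a \<in> (UNIV::'a set) \<and> b \<in> (UNIV::'a set)} = {0}" using yz by auto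
  thus ?thesis unfolding mult_sp_def using module.span_empty[OF md] vector_space.span_insert_0[OF P(1), of "{}"] by simp
qed

end
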